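(* Let $(A,\mu,\alpha,\beta)$ be a BiHom-commutative algebra, with $\mu(x\otimes y)=x\cdot y$, and let $D:A\to A$ be a derivation in the usual sense (i.e. $D(x\cdot y)=x\cdot D(y)+D(x)\cdot y$ for all $x,y$) commuting with $\alpha$ and $\beta$. Define $a\ast b=a\cdot D(b)$ for $a,b\in A$. Then $(A,\cdot,\ast,\alpha,\beta)$ is a BiHom-Novikov-Poisson algebra.
   Context: Work over a field. A BiHom-associative algebra is a 4-tuple $(A,\cdot,\alpha,\beta)$ with $\alpha,\beta:A\to A$ commuting linear maps, multiplicative for $\cdot$, and $\alpha(x)\cdot(y\cdot z)=(x\cdot y)\cdot\beta(z)$; it is BiHom-commutative if $\beta(a)\cdot\alpha(b)=\beta(b)\cdot\alpha(a)$ for all $a,b$. A BiHom-Novikov algebra is a 4-tuple $(A,\ast,\alpha,\beta)$ with commuting linear $\alpha,\beta$ multiplicative for $\ast$ such that $(\beta(x)\ast\alpha(y))\ast\beta(z)-\alpha\beta(x)\ast(\alpha(y)\ast z)=(\beta(y)\ast\alpha(x))\ast\beta(z)-\alpha\beta(y)\ast(\alpha(x)\ast z)$ and $(x\ast\beta(y))\ast\alpha\beta(z)=(x\ast\beta(z))\ast\alpha\beta(y)$ for all $x,y,z$. A BiHom-Novikov-Poisson algebra is a 5-tuple $(A,\cdot,\ast,\alpha,\beta)$ such that $(A,\cdot,\alpha,\beta)$ is BiHom-commutative, $(A,\ast,\alpha,\beta)$ is BiHom-Novikov, and for all $x,y,z$: $(\beta(x)\ast\alpha(y))\cdot\beta(z)-\alpha\beta(x)\ast(\alpha(y)\cdot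 z)=(\beta(y)\ast\alpha(x))\cdot\beta(z)-\alpha\beta(y)\ast(\alpha(x)\cdot z)$; $(x\cdot\beta(y))\ast\alpha\beta(z)=(x\ast\beta(z))\cdot\alpha\beta(y)$; $\alpha(x)\cdot(y\ast z)=(x\cdot y)\ast\beta(z)$. *)

theory Defs
  imports Main "HOL.Vector_Spaces"
begin

definition bilinear_op :: "('k::field \<Rightarrow> 'v::ab_group_add \<Rightarrow> 'v) \<Rightarrow> ('v \<Rightarrow> 'v \<Rightarrow> 'v) \<Rightarrow> bool" where
  "bilinear_op s m \<longleftrightarrow>
     (\<forall>x. Vector_Spaces.linear s s (m x)) \<and> (\<forall>y. Vector_Spaces.linear s s (\<lambda>x. m x y))"

definition bihom_structure ::
  "('k::field \<Rightarrow> 'v::ab_group_add \<Rightarrow> 'v) \<Rightarrow> ('v \<Rightarrow> 'v \<Rightarrow> 'v) \<Rightarrow> ('v \<Rightarrow> 'v) \<Rightarrow> ('v \<Rightarrow> 'v) \<Rightarrow> bool" where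
  "bihom_structure s m \<alpha> \<beta> \<longleftrightarrow>
     vector_space s \<and> bilinear_op s m \<and>
     Vector_Spaces.linear s s \<alpha> \<and> Vector_Spaces.linear s s \<beta> \<and>
     (\<forall>x. \<alpha> (\<beta> x) = \<beta> (\<alpha> x)) \<and>
     (\<forall>x y. \<alpha> (m x y) = m (\<alpha> x) (\<alpha> y)) \<and>
     (\<forall>x y. \<beta> (m x y) = m (\<beta> x) (\<beta> y))"

definition bihom_associative ::
  "('k::field \<Rightarrow> 'v::ab_group_add \<Rightarrow> 'v) \<Rightarrow> ('v \<Rightarrow> 'v \<Rightarrow> 'v) \<Rightarrow> ('v \<Rightarrow> 'v) \<Rightarrow> ('v \<Rightarrow> 'v) \<Rightarrow> bool" where
  "bihom_associative s m \<alpha> \<beta> \<longleftrightarrow>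
     bihom_structure s m \<alpha> \<beta> \<and>
     (\<forall>x y z. m (\<alpha> x) (m y z) = m (m x y) (\<beta> z))"

definition bihom_commutative ::
  "('k::field \<Rightarrow> 'v::ab_group_add \<Rightarrow> 'v) \<Rightarrow> ('v \<Rightarrow> 'v \<Rightarrow> 'v) \<Rightarrow> ('v \<Rightarrow> 'v) \<Rightarrow> ('v \<Rightarrow> 'v) \<Rightarrow> bool" where
  "bihom_commutative s m \<alpha> \<beta> \<longleftrightarrow>
     bihom_associative s m \<alpha> \<beta> \<and>
     (\<forall>a b. m (\<beta> a) (\<alpha> b) = m (\<beta> b) (\<alpha> a))"

definition bihom_novikov ::
  "('k::field \<Rightarrow> 'v::ab_group_add \<Rightarrow> 'v) \<Rightarrow> ('v \<Rightarrow> 'v \<Rightarrow> 'v) \<Rightarrow> ('v \<Rightarrow> 'v) \<Rightarrow> ('v \<Rightarrow> 'v) \<Rightarrow> bool" where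
  "bihom_novikov s n \<alpha> \<beta> \<longleftrightarrow>
     bihom_structure s n \<alpha> \<beta> \<and>
     (\<forall>x y z.
        n (n (\<beta> x) (\<alpha> y)) (\<beta> z) - n (\<alpha> (\<beta> x)) (n (\<alpha> y) z)
      = n (n (\<beta> y) (\<alpha> x)) (\<beta> z) - n (\<alpha> (\<beta> y)) (n (\<alpha> x) z)) \<and>
     (\<forall>x y z. n (n x (\<beta> y)) (\<alpha> (\<beta> z)) = n (n x (\<beta> z)) (\<alpha> (\<beta> y)))"

definition bihom_novikov_poisson ::
  "('k::field \<Rightarrow> 'v::ab_group_add \<Rightarrow> 'v) \<Rightarrow> ('v \<Rightarrow> 'v \<Rightarrow> 'v) \<Rightarrow> ('v \<Rightarrow> 'v \<Rightarrow> 'v)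
     \<Rightarrow> ('v \<Rightarrow> 'v) \<Rightarrow> ('v \<Rightarrow> 'v) \<Rightarrow> bool" where
  "bihom_novikov_poisson s m n \<alpha> \<beta> \<longleftrightarrow>
     bihom_commutative s m \<alpha> \<beta> \<and> bihom_novikov s n \<alpha> \<beta> \<and>
     (\<forall>x y z.
        m (n (\<beta> x) (\<alpha> y)) (\<beta> z) - n (\<alpha> (\<beta> x)) (m (\<alpha> y) z)
      = m (n (\<beta> y) (\<alpha> x)) (\<beta> z) - n (\<alpha> (\<beta> y)) (m (\<alpha> x) z)) \<and>
     (\<forall>x y z. n (m x (\<beta> y)) (\<alpha> (\<beta> z)) = m (n x (\<beta> z)) (\<alpha> (\<beta> y))) \<and>
     (\<forall>x y z. m (\<alpha> x) (n y z) = n (m x y) (\<beta> z))"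

end

theory Submission
  imports Defs
begin

theorem proposition3p4:
  fixes s :: "'k::field \<Rightarrow> 'v::ab_group_add \<Rightarrow> 'v"
    and m :: "'v \<Rightarrow> 'v \<Rightarrow> 'v"
    and \<alpha> \<beta> D :: "'v \<Rightarrow> 'v"
  assumes "bihom_commutative s m \<alpha> \<beta>"
    and "Vector_Spaces.linear s s D"
    and "\<And>x y. D (m x y) = m x (D y) + m (D x) y"
    and "\<And>x. D (\<alpha> x) = \<alpha> (D x)"
    and "\<And>x. D (\<beta> x) = \<beta> (D x)"
  shows "bihom_novikov_poisson s m (\<lambda>a b. m a (D b)) \<alpha> \<beta>"
proof -
  note c = assms(1)[unfolded bihom_commutative_def bihom_associative_def bihom_structure_def bilinear_op_def]
  have vs: "vector_space s" using c by blast
  have lx: "\<And>x. Vector_Spaces.linear s s (m x)" and ly: "\<And>y. Vector_Spaces.linear s s (\<lambda>x. m x y)"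
    using c by blast+
  have la: "Vector_Spaces.linear s s \<alpha>" and lb: "Vector_Spaces.linear s s \<beta>" using c by blast+
  have ab: "\<And>x. \<alpha> (\<beta> x) = \<beta> (\<alpha> x)" using c by blast
  have ma: "\<And>x y. \<alpha> (m x y) = m (\<alpha> x) (\<alpha> y)" using c by blast
  have mb: "\<And>x y. \<beta> (m x y) = m (\<beta> x) (\<beta> y)" using c by blast
  have as: "\<And>x y z. m (\<alpha> x) (m y z) = m (m x y) (\<beta> z)" using c by blast
  have cm: "\<And>a b. m (\<beta> a) (\<alpha> b) = m (\<beta> b) (\<alpha> a)" using c by blast
  have addr: "\<And>x y z. m x (y + z) = m x y + m x z" using lx unfolding linear_iff by blast
  have addl: "\<And>x y z. m (y + z) x = m y x + m z x" using ly unfolding linear_iff by blast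
  have Dl: "Vector_Spaces.linear s s D" by (rule assms(2))
  have D: "\<And>x y. D (m x y) = m x (D y) + m (D x) y" by (rule assms(3))
  have Da: "\<And>x. D (\<alpha> x) = \<alpha> (D x)" by (rule assms(4))
  have Db: "\<And>x. D (\<beta> x) = \<beta> (D x)" by (rule assms(5))
  have key: "\<And>x u w. m (m x (\<beta> u)) (\<alpha> (\<beta> w)) = m (m x (\<beta> w)) (\<alpha> (\<beta> u))"
  proof -
    fix x u w
    have "m (m x (\<beta> u)) (\<alpha> (\<beta> w)) = m (m x (\<beta> u)) (\<beta> (\<alpha> w))" by (simp add: ab)
    also have "\<dots> = m (\<alpha> x) (m (\<beta> u) (\<alpha> w))" by (simp add: as)
    also have "\<dots> = m (\<alpha> x) (m (\<beta> w) (\<alpha> u))" by (simp add: cm)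
    also have "\<dots> = m (m x (\<beta> w)) (\<beta> (\<alpha> u))" by (simp add: as)
    finally show "?thesis x u w" by (simp add: ab)
  qed
  have bil: "bilinear_op s (\<lambda>a b. m a (D b))"
    unfolding bilinear_op_def
  proof (intro conjI allI)
    fix x show "Vector_Spaces.linear s s (\<lambda>b. m x (D b))"
      using Vector_Spaces.linear_compose[OF Dl lx[of x]] by (simp add: o_def)
  next
    fix y show "Vector_Spaces.linear s s (\<lambda>x. m x (D y))" by (rule ly)
  qed
  have st: "bihom_structure s (\<lambda>a b. m a (D b)) \<alpha> \<beta>"
    unfolding bihom_structure_def using vs bil la lb ab ma mb Da Db by simp
  have nov: "bihom_novikov s (\<lambda>a b. m a (D b)) \<alpha> \<beta>"
    unfolding bihom_novikov_def
  proof (intro conjI allI st)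
    fix x y z
    have e: "\<And>x y. m (m (\<beta> x) (\<alpha> (D y))) (\<beta> (D z)) - m (\<alpha> (\<beta> x)) (D (m (\<alpha> y) (D z)))
        = - m (m (\<beta> x) (\<alpha> y)) (\<beta> (D (D z)))"
      by (simp add: D Da addr as[symmetric] ab)
    show "m (m (\<beta> x) (D (\<alpha> y))) (D (\<beta> z)) - m (\<alpha> (\<beta> x)) (D (m (\<alpha> y) (D z))) =
          m (m (\<beta> y) (D (\<alpha> x))) (D (\<beta> z)) - m (\<alpha> (\<beta> y)) (D (m (\<alpha> x) (D z)))"
      using e[of x y] e[of y x] cm[of x y] by (simp add: Da Db)
  next
    fix x y z
    show "m (m x (D (\<beta> y))) (D (\<alpha> (\<beta> z))) = m (m x (D (\<beta> z))) (D (\<alpha> (\<beta> y)))"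
      using key by (simp add: Da Db)
  qed
  show ?thesis
    unfolding bihom_novikov_poisson_def
  proof (intro conjI allI assms(1) nov)
    fix x y z
    have e: "\<And>x y. m (m (\<beta> x) (\<alpha> (D y))) (\<beta> z) - m (\<alpha> (\<beta> x)) (D (m (\<alpha> y) z))
        = - m (m (\<beta> x) (\<alpha> y)) (\<beta> (D z))"
      by (simp add: D Da addr as[symmetric] ab)
    show "m (m (\<beta> x) (D (\<alpha> y))) (\<beta> z) - m (\<alpha> (\<beta> x)) (D (m (\<alpha> y) z)) =
          m (m (\<beta> y) (D (\<alpha> x))) (\<beta> z) - m (\<alpha> (\<beta> y)) (D (m (\<alpha> x) z))"
      using e[of x y] e[of y x] cm[of x y] by (simp add: Da)
  next
    fix x y z
    show "m (m x (\<beta> y)) (D (\<alpha> (\<beta> z))) = m (m x (D (\<beta> z))) (\<alpha> (\<beta> y))"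
      using key[of x y "D z"] by (simp add: Da Db)
  next
    fix x y z
    show "m (\<alpha> x) (m y (D z)) = m (m x y) (D (\<beta> z))"
      by (simp add: as Db)
  qed
qed

end
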